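(* Let $b,d>0$ and $c\in\mathbb{R}$, and define $P_5:\mathbb{R}^{3\times3}\to\mathbb{R}$ by $P_5(R)=\sqrt{(\|R^TR-I\|_F+c)^2+b}$. On the open set $U=\{R:\|R^TR-I\|_F>d\}$, $P_5$ is twice differentiable with locally Lipschitz second derivatives, and there is a constant $L$ such that $-LI\preceq\nabla^2P_5(R)\preceq LI$ for all $R\in U$.
   Context: $\|\cdot\|_F$ is the Frobenius norm; $R$ is identified with a vector in $\mathbb{R}^9$. *)

theory Defs
  imports "HOL-Analysis.Analysis"
begin

text \<open>R in R^{3x3} is the type real^3^3; its norm is the Frobenius norm
  (Euclidean norm of R viewed as a vector in R^9).\<close>

definition P5 :: "real \<Rightarrow> real \<Rightarrow> real^3^3 \<Rightarrow> real" where
  "P5 b c R = sqrt ((norm (transpose R ** R - mat 1) + c)^2 + b)"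

definition U_set :: "real \<Rightarrow> (real^3^3) set" where
  "U_set d = {R. norm (transpose R ** R - mat 1) > d}"

end

theory Submission
  imports Defs
begin


definition LL :: "'a::metric_space set \<Rightarrow> ('a \<Rightarrow> 'b::metric_space) \<Rightarrow> bool" where
  "LL S f \<longleftrightarrow> (\<forall>x\<in>S. \<exists>e>0. \<exists>K. K-lipschitz_on (ball x e \<inter> S) f)"

lemma LL_const: "LL S (\<lambda>x. c)"
  unfolding LL_def using lipschitz_on_constant zero_less_one by blast

lemma LL_id: "LL S (\<lambda>x. x)"
  unfolding LL_def using lipschitz_on_id zero_less_one by blast

lemma LL_add:
  fixes f g :: "'a::metric_space \<Rightarrow> 'b::real_normed_vector"
  assumes f: "LL S f" and g: "LL S g"
  shows "LL S (\<lambda>x. f x + g x)"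
  unfolding LL_def
proof (intro ballI)
  fix x assume x: "x \<in> S"
  obtain e1 K1 where e1: "e1>0" and l1: "K1-lipschitz_on (ball x e1 \<inter> S) f"
    using f x LL_def by blast
  obtain e2 K2 where e2: "e2>0" and l2: "K2-lipschitz_on (ball x e2 \<inter> S) g"
    using g x LL_def by blast
  define e where "e = min e1 e2"
  have l1': "K1-lipschitz_on (ball x e \<inter> S) f"
    by (rule lipschitz_on_subset[OF l1]) (auto simp: e_def)
  have l2': "K2-lipschitz_on (ball x e \<inter> S) g"
    by (rule lipschitz_on_subset[OF l2]) (auto simp: e_def)
  show "\<exists>e>0. \<exists>K. K-lipschitz_on (ball x e \<inter> S) (\<lambda>x. f x + g x)"
  proof -
    have "e > 0" using e1 e2 by (simp add: e_def)
    with lipschitz_on_add[OF l1' l2'] show ?thesis by blast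
  qed
qed

lemma LL_bil:
  fixes prod :: "'b::real_normed_vector \<Rightarrow> 'c::real_normed_vector \<Rightarrow> 'd::real_normed_vector"
    and f :: "'a::metric_space \<Rightarrow> 'b" and g :: "'a \<Rightarrow> 'c"
  assumes bb: "bounded_bilinear prod" and f: "LL S f" and g: "LL S g"
  shows "LL S (\<lambda>x. prod (f x) (g x))"
  unfolding LL_def
proof (intro ballI)
  fix x assume x: "x \<in> S"
  obtain e1 K1 where e1: "e1>0" and l1: "K1-lipschitz_on (ball x e1 \<inter> S) f"
    using f x LL_def by blast
  obtain e2 K2 where e2: "e2>0" and l2: "K2-lipschitz_on (ball x e2 \<inter> S) g"
    using g x LL_def by blast
  obtain K where K: "K>0" "\<And>a b. norm (prod a b) \<le> norm a * norm b * K"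
    using bounded_bilinear.pos_bounded[OF bb] by blast
  define e where "e = min e1 e2"
  define A where "A = ball x e \<inter> S"
  have l1': "K1-lipschitz_on A f"
    by (rule lipschitz_on_subset[OF l1]) (auto simp: e_def A_def)
  have l2': "K2-lipschitz_on A g"
    by (rule lipschitz_on_subset[OF l2]) (auto simp: e_def A_def)
  have K1: "K1 \<ge> 0" using lipschitz_on_nonneg l1' by blast
  have K2: "K2 \<ge> 0" using lipschitz_on_nonneg l2' by blast
  have e: "e > 0" using e1 e2 by (simp add: e_def)
  have xA: "x \<in> A" using x e by (auto simp: A_def)
  define Bf where "Bf = norm (f x) + K1 * e"
  define Bg where "Bg = norm (g x) + K2 * e"
  have bf: "norm (f y) \<le> Bf" if "y \<in> A" for y
  proof -
    have "dist (f y) (f x) \<le> K1 * dist y x" using lipschitz_onD[OF l1' that xA] .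
    moreover have "dist y x \<le> e" using that by (auto simp: A_def dist_commute)
    ultimately have "dist (f y) (f x) \<le> K1 * e"
      by (meson K1 mult_left_mono order_trans)
    then show ?thesis unfolding Bf_def
      by (metis add.commute add_le_cancel_right dist_norm norm_triangle_sub order_trans)
  qed
  have bg: "norm (g y) \<le> Bg" if "y \<in> A" for y
  proof -
    have "dist (g y) (g x) \<le> K2 * dist y x" using lipschitz_onD[OF l2' that xA] .
    moreover have "dist y x \<le> e" using that by (auto simp: A_def dist_commute)
    ultimately have "dist (g y) (g x) \<le> K2 * e"
      by (meson K2 mult_left_mono order_trans)
    then show ?thesis unfolding Bg_def
      by (metis add.commute add_le_cancel_right dist_norm norm_triangle_sub order_trans)
  qed
  have Bf0: "Bf \<ge> 0" and Bg0: "Bg \<ge> 0" using bf bg xA norm_ge_zero order_trans by blast+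
  have "(K * (K1 * Bg + Bf * K2))-lipschitz_on A (\<lambda>x. prod (f x) (g x))"
  proof (rule lipschitz_onI)
    fix y z assume y: "y \<in> A" and z: "z \<in> A"
    have eq: "prod (f y) (g y) - prod (f z) (g z) = prod (f y - f z) (g y) + prod (f z) (g y - g z)"
      by (simp add: bounded_bilinear.diff_left[OF bb] bounded_bilinear.diff_right[OF bb])
    have n1: "norm (prod (f y - f z) (g y)) \<le> (K1 * dist y z) * Bg * K"
    proof -
      have "norm (prod (f y - f z) (g y)) \<le> norm (f y - f z) * norm (g y) * K" by (rule K(2))
      also have "\<dots> \<le> (K1 * dist y z) * Bg * K"
        apply (intro mult_right_mono mult_mono)
        using lipschitz_onD[OF l1' y z] bg[OF y] K K1 by (auto simp: dist_norm)
      finally show ?thesis .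
    qed
    have n2: "norm (prod (f z) (g y - g z)) \<le> Bf * (K2 * dist y z) * K"
    proof -
      have "norm (prod (f z) (g y - g z)) \<le> norm (f z) * norm (g y - g z) * K" by (rule K(2))
      also have "\<dots> \<le> Bf * (K2 * dist y z) * K"
        apply (intro mult_right_mono mult_mono)
        using lipschitz_onD[OF l2' y z] bf[OF z] K K2 Bf0 by (auto simp: dist_norm)
      finally show ?thesis .
    qed
    have "dist (prod (f y) (g y)) (prod (f z) (g z)) \<le> (K1 * dist y z) * Bg * K + Bf * (K2 * dist y z) * K"
      unfolding dist_norm eq using n1 n2 norm_triangle_le by (smt (verit))
    then show "dist (prod (f y) (g y)) (prod (f z) (g z)) \<le> K * (K1 * Bg + Bf * K2) * dist y z"
      by (simp add: algebra_simps)
  next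
    show "0 \<le> K * (K1 * Bg + Bf * K2)" using K K1 K2 Bf0 Bg0 by simp
  qed
  then show "\<exists>e>0. \<exists>K. K-lipschitz_on (ball x e \<inter> S) (\<lambda>x. prod (f x) (g x))"
    using e by (auto simp: A_def)
qed

lemma LL_comp:
  assumes g: "LL T g" and f: "LL S f" and sub: "f ` S \<subseteq> T"
  shows "LL S (\<lambda>x. g (f x))"
  unfolding LL_def
proof (intro ballI)
  fix x assume x: "x \<in> S"
  obtain e1 K1 where e1: "e1>0" and l1: "K1-lipschitz_on (ball x e1 \<inter> S) f"
    using f x LL_def by blast
  have fx: "f x \<in> T" using sub x by auto
  obtain e2 K2 where e2: "e2>0" and l2: "K2-lipschitz_on (ball (f x) e2 \<inter> T) g"
    using g fx LL_def by blast
  have K1: "K1 \<ge> 0" using lipschitz_on_nonneg l1 by blast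
  define e where "e = min e1 (e2 / (K1 + 1))"
  define A where "A = ball x e \<inter> S"
  have e: "e > 0" using e1 e2 K1 by (simp add: e_def)
  have xA: "x \<in> A" using x e by (auto simp: A_def)
  have l1': "K1-lipschitz_on A f"
    by (rule lipschitz_on_subset[OF l1]) (auto simp: e_def A_def)
  have fA: "f ` A \<subseteq> ball (f x) e2 \<inter> T"
  proof
    fix w assume "w \<in> f ` A"
    then obtain y where y: "y \<in> A" "w = f y" by auto
    have "dist (f x) (f y) \<le> K1 * dist x y" using lipschitz_onD[OF l1' xA y(1)] .
    also have "\<dots> \<le> K1 * e" using y(1) K1 by (auto simp: A_def intro!: mult_left_mono)
    also have "\<dots> \<le> K1 * (e2 / (K1 + 1))" using K1 by (intro mult_left_mono) (auto simp: e_def)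
    also have "\<dots> < e2" using K1 e2 by (simp add: field_simps)
    finally show "w \<in> ball (f x) e2 \<inter> T" using y sub A_def by auto
  qed
  have "(K2 * K1)-lipschitz_on A (g \<circ> f)"
    by (rule lipschitz_on_compose[OF l1' lipschitz_on_subset[OF l2 fA]])
  then show "\<exists>e>0. \<exists>K. K-lipschitz_on (ball x e \<inter> S) (\<lambda>x. g (f x))"
    using e by (auto simp: A_def o_def)
qed

lemma LL_lin:
  fixes h :: "'b::real_normed_vector \<Rightarrow> 'c::real_normed_vector" and f :: "'a::metric_space \<Rightarrow> 'b"
  assumes bl: "bounded_linear h" and f: "LL S f"
  shows "LL S (\<lambda>x. h (f x))"
proof -
  obtain K where K: "K>0" "\<And>a. norm (h a) \<le> norm a * K"
    using bounded_linear.pos_bounded[OF bl] by blast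
  have "LL UNIV h"
    unfolding LL_def
  proof (intro ballI exI conjI)
    show "K-lipschitz_on (ball x 1 \<inter> UNIV) h" for x
    proof (rule lipschitz_onI)
      fix y z
      show "dist (h y) (h z) \<le> K * dist y z"
        using K(2)[of "y - z"] by (simp add: dist_norm linear_diff[OF bounded_linear.linear[OF bl]] mult.commute)
    qed (use K in simp)
  qed simp
  then show ?thesis using LL_comp f by blast
qed

lemma LL_norm: "LL S f \<Longrightarrow> LL S (\<lambda>x. norm (f x))"
proof -
  have "LL UNIV (norm :: 'b::real_normed_vector \<Rightarrow> real)"
    unfolding LL_def
    by (auto intro!: exI[of _ 1] lipschitz_onI simp: dist_norm norm_triangle_ineq3)
  then show "LL S f \<Longrightarrow> LL S (\<lambda>x. norm (f x :: 'b))" using LL_comp by blast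
qed

lemma LL_inverse: "LL {0<..} (inverse :: real \<Rightarrow> real)"
  unfolding LL_def
proof (intro ballI)
  fix x :: real assume "x \<in> {0<..}"
  then have x: "x > 0" by simp
  have "(4 / x^2)-lipschitz_on (ball x (x/2) \<inter> {0<..}) inverse"
  proof (rule lipschitz_onI)
    fix y z assume y: "y \<in> ball x (x/2) \<inter> {0<..}" and z: "z \<in> ball x (x/2) \<inter> {0<..}"
    have y2: "y > x/2" and z2: "z > x/2" using y z by (auto simp: dist_real_def abs_if split: if_splits)
    have eq1: "dist (inverse y) (inverse z) = \<bar>y - z\<bar> / (y * z)"
      using y2 z2 x by (simp add: dist_real_def field_simps abs_minus_commute)
    have yz: "x^2/4 \<le> y*z"
    proof -
      have "(x/2)*(x/2) \<le> y*z" by (rule mult_mono) (use y2 z2 x in auto)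
      then show ?thesis by (simp add: power2_eq_square)
    qed
    have "dist (inverse y) (inverse z) \<le> \<bar>y - z\<bar> / (x^2/4)"
      unfolding eq1 by (rule divide_left_mono[OF yz]) (use y2 z2 x in auto)
    also have "\<dots> = 4 / x^2 * dist y z" by (simp add: dist_real_def field_simps)
    finally show "dist (inverse y) (inverse z) \<le> 4 / x^2 * dist y z" .
  qed simp
  then show "\<exists>e>0. \<exists>K. K-lipschitz_on (ball x e \<inter> {0<..}) inverse"
    using x by (intro exI[of _ "x/2"]) auto
qed

lemma LL_sqrt: "LL {0<..} sqrt"
  unfolding LL_def
proof (intro ballI)
  fix x :: real assume "x \<in> {0<..}"
  then have x: "x > 0" by simp
  have "(1 / sqrt (x/2))-lipschitz_on (ball x (x/2) \<inter> {0<..}) sqrt"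
  proof (rule lipschitz_onI)
    fix y z assume y: "y \<in> ball x (x/2) \<inter> {0<..}" and z: "z \<in> ball x (x/2) \<inter> {0<..}"
    have y2: "y > x/2" and z2: "z > x/2" using y z by (auto simp: dist_real_def abs_if split: if_splits)
    have sy: "sqrt y \<ge> sqrt (x/2)" using y2 by simp
    have sz: "sqrt z \<ge> 0" using z2 x by simp
    have pos: "sqrt (x/2) > 0" using x by simp
    have eq: "\<bar>sqrt y - sqrt z\<bar> * (sqrt y + sqrt z) = \<bar>y - z\<bar>"
    proof -
      have "(sqrt y - sqrt z) * (sqrt y + sqrt z) = y - z"
        using y2 z2 x by (simp add: algebra_simps)
      moreover have "sqrt y + sqrt z \<ge> 0" using sy sz pos by linarith
      ultimately show ?thesis by (metis abs_mult abs_of_nonneg)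
    qed
    have "\<bar>sqrt y - sqrt z\<bar> * sqrt (x/2) \<le> \<bar>y - z\<bar>"
      using eq sy sz by (metis abs_ge_zero add_increasing2 mult_left_mono)
    then show "dist (sqrt y) (sqrt z) \<le> 1 / sqrt (x/2) * dist y z"
      using pos by (simp add: dist_real_def field_simps)
  qed (use x in simp)
  then show "\<exists>e>0. \<exists>K. K-lipschitz_on (ball x e \<inter> {0<..}) sqrt"
    using x by (intro exI[of _ "x/2"]) auto
qed


type_synonym M = "real^3^3"
definition tm :: "M \<Rightarrow> M \<Rightarrow> M" where "tm A B = transpose A ** B"

lemma bilinear_tm: "bilinear tm"
  unfolding bilinear_def tm_def
  apply (intro conjI allI linearI)
  apply (simp_all add: vec_eq_iff matrix_matrix_mult_def transpose_def
      sum.distrib sum_distrib_left  distrib_left distrib_right mult.assoc mult.left_commute)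
  done

lemma bb_tm: "bounded_bilinear tm"
  using bilinear_tm bilinear_conv_bounded_bilinear by blast

lemmas tm_simps = bounded_bilinear.add_left[OF bb_tm] bounded_bilinear.add_right[OF bb_tm]
  bounded_bilinear.scaleR_left[OF bb_tm] bounded_bilinear.scaleR_right[OF bb_tm]

definition GG :: "M \<Rightarrow> M" where "GG R = tm R R - mat 1"
definition DG :: "M \<Rightarrow> M \<Rightarrow> M" where "DG R W = tm R W + tm W R"
definition B1f :: "M \<Rightarrow> M \<Rightarrow> M \<Rightarrow> real" where "B1f X Y V = X \<bullet> (tm Y V + tm V Y)"
definition B1 :: "M \<Rightarrow> M \<Rightarrow> (M \<Rightarrow>\<^sub>L real)" where "B1 X Y = Blinfun (B1f X Y)"

lemma bl_DG: "bounded_linear (DG R)"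
  unfolding DG_def
  by (intro bounded_linear_add bounded_bilinear.bounded_linear_right[OF bb_tm]
      bounded_bilinear.bounded_linear_left[OF bb_tm])

lemma bl_B1f: "bounded_linear (B1f X Y)"
proof -
  have "bounded_linear (\<lambda>V. X \<bullet> DG Y V)"
    using bounded_linear_compose[OF bounded_linear_inner_right bl_DG] .
  then show ?thesis unfolding B1f_def DG_def .
qed

lemma B1_apply[simp]: "blinfun_apply (B1 X Y) = B1f X Y"
  unfolding B1_def using bl_B1f bounded_linear_Blinfun_apply by blast

lemma bb_B1: "bounded_bilinear B1"
proof -
  have "bilinear B1"
    unfolding bilinear_def
    by (auto intro!: linearI blinfun_eqI simp: B1f_def tm_simps inner_add_left inner_add_right
        algebra_simps plus_blinfun.rep_eq scaleR_blinfun.rep_eq)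
  then show ?thesis using bilinear_conv_bounded_bilinear by blast
qed

lemmas B1_simps = bounded_bilinear.add_left[OF bb_B1] bounded_bilinear.add_right[OF bb_B1]
  bounded_bilinear.scaleR_left[OF bb_B1] bounded_bilinear.scaleR_right[OF bb_B1]

definition T2 :: "M \<Rightarrow> (M \<Rightarrow>\<^sub>L (M \<Rightarrow>\<^sub>L real))" where "T2 X = Blinfun (\<lambda>W. B1 X W)"
definition T3 :: "M \<Rightarrow> M \<Rightarrow> (M \<Rightarrow>\<^sub>L (M \<Rightarrow>\<^sub>L real))" where
  "T3 A B = Blinfun (\<lambda>W. B1 (DG A W) B)"

lemma T2_apply[simp]: "blinfun_apply (T2 X) = (\<lambda>W. B1 X W)"
  unfolding T2_def using bounded_bilinear.bounded_linear_right[OF bb_B1] bounded_linear_Blinfun_apply by blast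

lemma T3_apply[simp]: "blinfun_apply (T3 A B) = (\<lambda>W. B1 (DG A W) B)"
proof -
  have "bounded_linear (\<lambda>W. B1 (DG A W) B)"
    using bounded_linear_compose[OF bounded_bilinear.bounded_linear_left[OF bb_B1] bl_DG] .
  then show ?thesis unfolding T3_def using bounded_linear_Blinfun_apply by blast
qed

lemma bl_T2: "bounded_linear T2"
proof -
  have "linear T2"
    by (auto intro!: linearI blinfun_eqI simp: B1_simps plus_blinfun.rep_eq scaleR_blinfun.rep_eq)
  then show ?thesis using linear_conv_bounded_linear by blast
qed

lemma bb_T3: "bounded_bilinear T3"
proof -
  have "bilinear T3"
    unfolding bilinear_def
    by (auto intro!: linearI blinfun_eqI simp: B1_simps DG_def tm_simps algebra_simps plus_blinfun.rep_eq scaleR_blinfun.rep_eq)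
  then show ?thesis using bilinear_conv_bounded_bilinear by blast
qed

definition outer :: "(M \<Rightarrow>\<^sub>L real) \<Rightarrow> (M \<Rightarrow>\<^sub>L real) \<Rightarrow> (M \<Rightarrow>\<^sub>L (M \<Rightarrow>\<^sub>L real))" where
  "outer p q = Blinfun (\<lambda>W. blinfun_apply p W *\<^sub>R q)"

lemma outer_apply[simp]: "blinfun_apply (outer p q) = (\<lambda>W. blinfun_apply p W *\<^sub>R q)"
proof -
  have "bounded_linear (\<lambda>W. blinfun_apply p W *\<^sub>R q)"
    using bounded_linear_compose[OF bounded_linear_scaleR_left blinfun.bounded_linear_right] .
  then show ?thesis unfolding outer_def using bounded_linear_Blinfun_apply by blast
qed

lemma bb_outer: "bounded_bilinear outer"
proof
  show "outer (a + a') b = outer a b + outer a' b" for a a' b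
    by (auto intro!: blinfun_eqI simp: blinfun.add_left scaleR_add_left plus_blinfun.rep_eq)
  show "outer a (b + b') = outer a b + outer a b'" for a b b'
    by (auto intro!: blinfun_eqI simp: scaleR_add_right plus_blinfun.rep_eq)
  show "outer (r *\<^sub>R a) b = r *\<^sub>R outer a b" for r a b
    by (auto intro!: blinfun_eqI simp: scaleR_blinfun.rep_eq)
  show "outer a (r *\<^sub>R b) = r *\<^sub>R outer a b" for r a b
    by (auto intro!: blinfun_eqI simp: scaleR_blinfun.rep_eq)
  show "\<exists>K. \<forall>a b. norm (outer a b) \<le> norm a * norm b * K"
  proof (intro exI allI)
    fix a b
    show "norm (outer a b) \<le> norm a * norm b * 1"
    proof (simp, rule norm_blinfun_bound)
      show "0 \<le> norm a * norm b" by simp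
      fix W
      have "norm (blinfun_apply (outer a b) W) = \<bar>blinfun_apply a W\<bar> * norm b" by simp
      also have "\<dots> \<le> (norm a * norm W) * norm b"
        using norm_blinfun[of a W] by (intro mult_right_mono) auto
      finally show "norm (blinfun_apply (outer a b) W) \<le> norm a * norm b * norm W"
        by (simp add: algebra_simps)
    qed
  qed
qed



definition sq :: "real \<Rightarrow> real \<Rightarrow> real \<Rightarrow> real" where "sq b c t = sqrt ((t + c)^2 + b)"
definition phi :: "real \<Rightarrow> real \<Rightarrow> real \<Rightarrow> real" where
  "phi b c t = (t + c) * inverse t * inverse (sq b c t)"
definition phi' :: "real \<Rightarrow> real \<Rightarrow> real \<Rightarrow> real" where
  "phi' b c t = inverse t * inverse (sq b c t) - (t + c) * (inverse t)^2 * inverse (sq b c t)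
     - (t + c)^2 * inverse t * (inverse (sq b c t))^3"
definition nn :: "M \<Rightarrow> real" where "nn R = norm (GG R)"
definition PP :: "M \<Rightarrow> (M \<Rightarrow>\<^sub>L real)" where "PP R = B1 (GG R) R"
definition DD1 :: "real \<Rightarrow> real \<Rightarrow> M \<Rightarrow> (M \<Rightarrow>\<^sub>L real)" where
  "DD1 b c R = phi b c (nn R) *\<^sub>R PP R"
definition DD2 :: "real \<Rightarrow> real \<Rightarrow> M \<Rightarrow> (M \<Rightarrow>\<^sub>L (M \<Rightarrow>\<^sub>L real))" where
  "DD2 b c R = (phi' b c (nn R) / nn R) *\<^sub>R outer (PP R) (PP R) + phi b c (nn R) *\<^sub>R (T2 (GG R) + T3 R R)"

lemma sq_pos: "b > 0 \<Longrightarrow> sq b c t > 0"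
  unfolding sq_def by (simp add: add_nonneg_pos)

lemma sq_deriv: "b > 0 \<Longrightarrow> (sq b c has_real_derivative (t + c) / sq b c t) (at t)"
proof -
  assume b: "b > 0"
  have pos: "0 < (t + c)^2 + b" using b by (meson add_nonneg_pos zero_le_power2)
  have d1: "((\<lambda>x. (x+c)^2 + b) has_real_derivative 2*(t+c)) (at t)"
    apply (rule derivative_eq_intros refl)+
    apply simp
    done
  have "((\<lambda>x. sqrt ((x+c)^2 + b)) has_real_derivative inverse (sqrt ((t + c)^2 + b)) / 2 * (2*(t+c))) (at t)"
    using DERIV_chain2[OF DERIV_real_sqrt[OF pos] d1] .
  moreover have "inverse (sqrt ((t + c)^2 + b)) / 2 * (2*(t+c)) = (t + c) / sqrt ((t + c)^2 + b)"
    by (simp only: divide_inverse mult_ac) simp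
  ultimately show ?thesis unfolding sq_def by (rule DERIV_cong)
qed

lemma phi_deriv: "b > 0 \<Longrightarrow> t > 0 \<Longrightarrow> (phi b c has_real_derivative phi' b c t) (at t)"
proof -
  assume b: "b > 0" and t: "t > 0"
  have s: "sq b c t > 0" using sq_pos b by blast
  have d1: "((\<lambda>x. x + c) has_real_derivative 1) (at t)"
    apply (rule derivative_eq_intros refl)+
    apply simp
    done
  have d2: "((\<lambda>x. inverse x) has_real_derivative - (inverse t ^ Suc (Suc 0))) (at t)"
    using DERIV_inverse[of t] t by simp
  have d3: "((\<lambda>x. inverse (sq b c x)) has_real_derivative
     - ((t + c) / sq b c t * inverse (sq b c t ^ Suc (Suc 0)))) (at t)"
    using DERIV_inverse_fun[OF sq_deriv[OF b]] s by simp
  note d = DERIV_mult[OF DERIV_mult[OF d1 d2] d3]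
  have eq: "(1 * inverse t + - (inverse t ^ Suc (Suc 0)) * (t + c)) * inverse u
     + - ((t + c) / u * inverse (u ^ Suc (Suc 0))) * ((t + c) * inverse t)
     = inverse t * inverse u - (t + c) * (inverse t)^2 * inverse u
     - (t + c)^2 * inverse t * (inverse u)^3" if u: "u > 0" for u :: real
    using t u by (simp add: field_simps power2_eq_square power3_eq_cube)
  show ?thesis unfolding phi_def phi'_def
    by (rule DERIV_cong[OF d eq[OF s]])
qed

lemma GG_deriv: "(GG has_derivative DG R) (at R)"
proof -
  have "((\<lambda>R. tm R R) has_derivative (\<lambda>h. tm R h + tm h R)) (at R)"
    using bounded_bilinear.FDERIV[OF bb_tm has_derivative_ident has_derivative_ident] .
  then have "((\<lambda>R. tm R R - mat 1) has_derivative (\<lambda>h. tm R h + tm h R - 0)) (at R)"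
    by (intro has_derivative_diff has_derivative_const)
  then show ?thesis unfolding GG_def DG_def by simp
qed

lemma nn_deriv: "GG R \<noteq> 0 \<Longrightarrow> (nn has_derivative (\<lambda>W. DG R W \<bullet> sgn (GG R))) (at R)"
  unfolding nn_def using has_derivative_compose[OF GG_deriv has_derivative_norm] by blast

lemma P5_eq: "P5 b c = (\<lambda>R. sq b c (nn R))"
  unfolding P5_def sq_def nn_def GG_def tm_def by simp

lemma P5_deriv:
  assumes b: "b > 0" and G: "GG R \<noteq> 0"
  shows "(P5 b c has_derivative blinfun_apply (DD1 b c R)) (at R)"
proof -
  have "((\<lambda>R. sq b c (nn R)) has_derivative (\<lambda>W. (nn R + c) / sq b c (nn R) * (DG R W \<bullet> sgn (GG R)))) (at R)"
    using has_derivative_compose[OF nn_deriv[OF G] sq_deriv[OF b, unfolded has_field_derivative_def]] .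
  moreover have "(\<lambda>W. (nn R + c) / sq b c (nn R) * (DG R W \<bullet> sgn (GG R))) = blinfun_apply (DD1 b c R)"
  proof
    fix W
    have 1: "blinfun_apply (DD1 b c R) W = phi b c (nn R) * (GG R \<bullet> DG R W)"
      by (simp add: DD1_def PP_def scaleR_blinfun.rep_eq B1f_def DG_def)
    have 2: "DG R W \<bullet> sgn (GG R) = (GG R \<bullet> DG R W) / nn R"
      by (simp add: sgn_div_norm nn_def inner_commute divide_inverse)
    show "(nn R + c) / sq b c (nn R) * (DG R W \<bullet> sgn (GG R)) = blinfun_apply (DD1 b c R) W"
      unfolding 1 2 phi_def by (simp add: divide_inverse mult_ac)
  qed
  ultimately show ?thesis unfolding P5_eq by simp
qed

lemma D1_deriv:
  assumes b: "b > 0" and G: "GG R \<noteq> 0"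
  shows "(DD1 b c has_derivative blinfun_apply (DD2 b c R)) (at R)"
proof -
  have n: "nn R > 0" using G by (simp add: nn_def)
  have a: "((\<lambda>R. phi b c (nn R)) has_derivative (\<lambda>W. phi' b c (nn R) * (DG R W \<bullet> sgn (GG R)))) (at R)"
    using has_derivative_compose[OF nn_deriv[OF G] phi_deriv[OF b n, unfolded has_field_derivative_def]] .
  have p: "(PP has_derivative (\<lambda>W. B1 (GG R) W + B1 (DG R W) R)) (at R)"
    using bounded_bilinear.FDERIV[OF bb_B1 GG_deriv has_derivative_ident] unfolding PP_def .
  have d: "(DD1 b c has_derivative (\<lambda>W. phi b c (nn R) *\<^sub>R (B1 (GG R) W + B1 (DG R W) R)
      + (phi' b c (nn R) * (DG R W \<bullet> sgn (GG R))) *\<^sub>R PP R)) (at R)"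
    using has_derivative_scaleR[OF a p] unfolding DD1_def[abs_def] .
  have "(\<lambda>W. phi b c (nn R) *\<^sub>R (B1 (GG R) W + B1 (DG R W) R)
      + (phi' b c (nn R) * (DG R W \<bullet> sgn (GG R))) *\<^sub>R PP R) = blinfun_apply (DD2 b c R)"
  proof
    fix W
    have 2: "DG R W \<bullet> sgn (GG R) = (GG R \<bullet> DG R W) / nn R"
      by (simp add: sgn_div_norm nn_def inner_commute divide_inverse)
    have 3: "blinfun_apply (DD2 b c R) W = (phi' b c (nn R) / nn R * (GG R \<bullet> DG R W)) *\<^sub>R PP R
       + phi b c (nn R) *\<^sub>R (B1 (GG R) W + B1 (DG R W) R)"
      by (simp add: DD2_def plus_blinfun.rep_eq scaleR_blinfun.rep_eq PP_def B1f_def DG_def)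
    show "phi b c (nn R) *\<^sub>R (B1 (GG R) W + B1 (DG R W) R)
      + (phi' b c (nn R) * (DG R W \<bullet> sgn (GG R))) *\<^sub>R PP R = blinfun_apply (DD2 b c R) W"
      unfolding 2 3 by (simp add: divide_inverse mult_ac)
  qed
  with d show ?thesis by simp
qed


lemma LL_mult: "LL S f \<Longrightarrow> LL S g \<Longrightarrow> LL S (\<lambda>x. f x * g x :: real)"
  by (rule LL_bil[OF bounded_bilinear_mult])

lemma LL_scaleR: "LL S f \<Longrightarrow> LL S g \<Longrightarrow> LL S (\<lambda>x. f x *\<^sub>R g x :: 'b::real_normed_vector)"
  by (rule LL_bil[OF bounded_bilinear_scaleR])

lemma LL_minus: "LL S f \<Longrightarrow> LL S (\<lambda>x. - f x :: 'b::real_normed_vector)"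
  by (rule LL_lin[OF bounded_linear_minus[OF bounded_linear_ident]])

lemma LL_diff: "LL S f \<Longrightarrow> LL S g \<Longrightarrow> LL S (\<lambda>x. f x - g x :: 'b::real_normed_vector)"
proof -
  assume f: "LL S f" and g: "LL S g"
  have "LL S (\<lambda>x. f x + - g x)" by (rule LL_add[OF f LL_minus[OF g]])
  then show ?thesis by simp
qed

lemma U_eq: "U_set d = {R. d < nn R}"
  by (simp add: U_set_def nn_def GG_def tm_def)

lemma LL_GG: "LL S GG"
proof -
  have "LL S (\<lambda>R. tm R R - mat 1)"
    by (intro LL_diff LL_bil[OF bb_tm] LL_id LL_const)
  then show ?thesis unfolding GG_def[abs_def] .
qed

lemma LL_nn: "LL S nn"
  unfolding nn_def[abs_def] by (intro LL_norm LL_GG)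

lemma LL_PP: "LL S PP"
  unfolding PP_def[abs_def] by (intro LL_bil[OF bb_B1] LL_GG LL_id)

lemma LL_D2:
  assumes b: "b > 0" and d: "d > 0"
  shows "LL (U_set d) (DD2 b c)"
proof -
  let ?U = "U_set d"
  have npos: "nn ` ?U \<subseteq> {0<..}" using d by (auto simp: U_eq)
  have i: "LL ?U (\<lambda>R. inverse (nn R))"
    by (rule LL_comp[OF LL_inverse LL_nn npos])
  have m: "LL ?U (\<lambda>R. nn R + c)" by (intro LL_add LL_nn LL_const)
  have spos: "(\<lambda>R. (nn R + c) * (nn R + c) + b) ` ?U \<subseteq> {0<..}"
    using b by (auto intro: add_nonneg_pos)
  have s: "LL ?U (\<lambda>R. sq b c (nn R))"
  proof -
    have "LL ?U (\<lambda>R. sqrt ((nn R + c) * (nn R + c) + b))"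
      by (rule LL_comp[OF LL_sqrt _ spos]) (intro LL_add LL_mult m LL_const)
    then show ?thesis unfolding sq_def power2_eq_square .
  qed
  have sq_img: "(\<lambda>R. sq b c (nn R)) ` ?U \<subseteq> {0<..}" using sq_pos[OF b] by auto
  have j: "LL ?U (\<lambda>R. inverse (sq b c (nn R)))"
    by (rule LL_comp[OF LL_inverse s sq_img])
  have ph: "LL ?U (\<lambda>R. phi b c (nn R))"
    unfolding phi_def by (intro LL_mult m i j)
  have pd: "LL ?U (\<lambda>R. phi' b c (nn R) / nn R)"
    unfolding phi'_def power2_eq_square power3_eq_cube divide_inverse
    by (intro LL_mult LL_diff m i j)
  have "LL ?U (\<lambda>R. (phi' b c (nn R) / nn R) *\<^sub>R outer (PP R) (PP R) + phi b c (nn R) *\<^sub>R (T2 (GG R) + T3 R R))"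
    by (intro LL_add LL_scaleR pd ph LL_bil[OF bb_outer] LL_PP LL_lin[OF bl_T2] LL_GG
        LL_bil[OF bb_T3] LL_id)
  then show ?thesis unfolding DD2_def[abs_def] .
qed

lemma hess_real:
  fixes n d x y P Bv g w r K m K1 :: real
  assumes d: "d > 0" and nd: "d < n"
    and hP: "\<bar>P\<bar> \<le> n * g" and hg: "g \<le> 2 * K * r * w" and hB: "\<bar>Bv\<bar> \<le> 2 * K * n * w^2"
    and hr: "r^2 \<le> m * n + m^2" and hy: "\<bar>y\<bar> \<le> 1 / n" and hx: "\<bar>x\<bar> * n^2 \<le> K1"
    and K: "K > 0" and m: "m \<ge> 0" and g0: "g \<ge> 0" and w0: "w \<ge> 0" and r0: "r \<ge> 0"
  shows "\<bar>x / n * P^2 + y * (Bv + g^2)\<bar> \<le> ((K1 + 1) * (4 * K^2 * (m + m^2 / d)) + 2 * K) * w^2"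
proof -
  have n: "n > 0" using d nd by simp
  have K1: "K1 \<ge> 0" using hx by (smt (verit) mult_nonneg_nonneg abs_ge_zero zero_le_power2)
  have P2: "P^2 \<le> n^2 * g^2"
  proof -
    have "\<bar>P\<bar>^2 \<le> (n*g)^2" using hP by (intro power_mono) auto
    then show ?thesis by (simp add: power_mult_distrib)
  qed
  have t1: "\<bar>x / n * P^2\<bar> \<le> K1 / n * g^2"
  proof -
    have "\<bar>x / n * P^2\<bar> = \<bar>x\<bar> / n * P^2" using n by (simp add: abs_mult)
    also have "\<dots> \<le> \<bar>x\<bar> / n * (n^2 * g^2)" using P2 n by (intro mult_left_mono) auto
    also have "\<dots> = (\<bar>x\<bar> * n^2) / n * g^2" using n by (simp add: field_simps power2_eq_square)
    also have "\<dots> \<le> K1 / n * g^2" using hx n by (intro mult_right_mono divide_right_mono) auto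
    finally show ?thesis .
  qed
  have t2: "\<bar>y * (Bv + g^2)\<bar> \<le> 2 * K * w^2 + g^2 / n"
  proof -
    have "\<bar>y * (Bv + g^2)\<bar> = \<bar>y\<bar> * \<bar>Bv + g^2\<bar>" by (simp add: abs_mult)
    also have "\<dots> \<le> (1/n) * (2 * K * n * w^2 + g^2)"
    proof (intro mult_mono hy)
      have "g^2 \<ge> 0" by simp
      then show "\<bar>Bv + g^2\<bar> \<le> 2 * K * n * w^2 + g^2" using hB by linarith
    qed (use n in auto)
    also have "\<dots> = 2 * K * w^2 + g^2 / n" using n by (simp add: field_simps)
    finally show ?thesis .
  qed
  have t3: "g^2 \<le> 4 * K^2 * (m * n + m^2) * w^2"
  proof -
    have "g^2 \<le> (2 * K * r * w)^2" using hg g0 by (intro power_mono) auto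
    also have "\<dots> = 4 * K^2 * w^2 * r^2" by (simp add: power_mult_distrib)
    also have "\<dots> \<le> 4 * K^2 * w^2 * (m * n + m^2)" using hr by (intro mult_left_mono) auto
    finally show ?thesis by (simp add: mult_ac)
  qed
  have t4: "g^2 / n \<le> 4 * K^2 * (m + m^2 / d) * w^2"
  proof -
    have "g^2 / n \<le> 4 * K^2 * (m * n + m^2) * w^2 / n" using t3 n by (intro divide_right_mono) auto
    also have "\<dots> = 4 * K^2 * (m + m^2 / n) * w^2" using n by (simp add: field_simps)
    also have "\<dots> \<le> 4 * K^2 * (m + m^2 / d) * w^2"
    proof -
      have "m^2 / n \<le> m^2 / d" using d nd by (intro divide_left_mono) auto
      then show ?thesis using K w0 by (intro mult_right_mono mult_left_mono) auto
    qed
    finally show ?thesis .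
  qed
  have t5: "K1 / n * g^2 \<le> K1 * (4 * K^2 * (m + m^2 / d) * w^2)"
  proof -
    have "K1 / n * g^2 = K1 * (g^2 / n)" by simp
    also have "\<dots> \<le> K1 * (4 * K^2 * (m + m^2 / d) * w^2)" using t4 K1 by (intro mult_left_mono) auto
    finally show ?thesis .
  qed
  have "\<bar>x / n * P^2 + y * (Bv + g^2)\<bar> \<le> \<bar>x / n * P^2\<bar> + \<bar>y * (Bv + g^2)\<bar>" by (rule abs_triangle_ineq)
  also have "\<dots> \<le> K1 * (4 * K^2 * (m + m^2 / d) * w^2) + 2 * K * w^2 + 4 * K^2 * (m + m^2 / d) * w^2"
    using t1 t2 t4 t5 by linarith
  also have "\<dots> = ((K1 + 1) * (4 * K^2 * (m + m^2 / d)) + 2 * K) * w^2" by (simp add: algebra_simps add_divide_distrib)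
  finally show ?thesis .
qed
lemma phi_real_bounds:
  fixes n c b s :: real
  assumes n: "n > 0" and b: "b > 0" and s: "s > 0" and s2: "s^2 = (n + c)^2 + b"
  shows "\<bar>(n + c) * inverse n * inverse s\<bar> \<le> 1 / n"
    and "\<bar>inverse n * inverse s - (n + c) * (inverse n)^2 * inverse s
     - (n + c)^2 * inverse n * (inverse s)^3\<bar> * n^2 \<le> 1 + 2 * \<bar>c\<bar> / sqrt b"
proof -
  have ncs: "\<bar>n + c\<bar> \<le> s"
  proof -
    have "\<bar>n + c\<bar>^2 \<le> s^2" using s2 b by simp
    then show ?thesis using s by (meson abs_ge_zero less_imp_le power2_le_imp_le)
  qed
  have sb: "sqrt b \<le> s"
  proof -
    have "b \<le> s^2" using s2 by simp
    then show ?thesis using s by (meson less_imp_le real_le_lsqrt real_sqrt_le_iff order_trans)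
  qed
  have sbp: "sqrt b > 0" using b by simp
  show "\<bar>(n + c) * inverse n * inverse s\<bar> \<le> 1 / n"
  proof -
    have "\<bar>(n + c) * inverse n * inverse s\<bar> = (\<bar>n + c\<bar> / s) / n" using n s by (simp add: abs_mult field_simps)
    also have "\<dots> \<le> 1 / n" using ncs s n by (intro divide_right_mono) auto
    finally show ?thesis .
  qed
  have eq: "(inverse n * inverse s - (n + c) * (inverse n)^2 * inverse s
     - (n + c)^2 * inverse n * (inverse s)^3) * n^2 = - c / s - n * ((n + c)^2 / s^2) / s"
    using n s by (simp add: field_simps power2_eq_square power3_eq_cube)
  have q: "(n + c)^2 / s^2 \<le> 1"
  proof -
    have "(n + c)^2 \<le> s^2" using s2 b by simp
    moreover have "s^2 > 0" using s by simp
    ultimately show ?thesis by (simp add: divide_le_eq_1)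
  qed
  have q0: "(n + c)^2 / s^2 \<ge> 0" by simp
  have "\<bar>- c / s - n * ((n + c)^2 / s^2) / s\<bar> \<le> \<bar>c\<bar> / s + n / s"
  proof -
    have "n * ((n + c)^2 / s^2) \<le> n" using mult_left_le[OF q, of n] n by linarith
    then have "n * ((n + c)^2 / s^2) / s \<le> n / s" using s by (intro divide_right_mono) auto
    moreover have "n * ((n + c)^2 / s^2) / s \<ge> 0" using n s q0 by simp
    moreover have "\<bar>- c / s\<bar> = \<bar>c\<bar> / s" using s by simp
    ultimately show ?thesis by linarith
  qed
  also have "\<dots> \<le> \<bar>c\<bar> / s + (s + \<bar>c\<bar>) / s"
    using ncs s by (intro add_left_mono divide_right_mono) auto
  also have "\<dots> = 1 + 2 * \<bar>c\<bar> / s" using s by (simp add: field_simps)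
  also have "\<dots> \<le> 1 + 2 * \<bar>c\<bar> / sqrt b"
    using sb sbp s by (intro add_left_mono divide_left_mono) auto
  finally show "\<bar>inverse n * inverse s - (n + c) * (inverse n)^2 * inverse s
     - (n + c)^2 * inverse n * (inverse s)^3\<bar> * n^2 \<le> 1 + 2 * \<bar>c\<bar> / sqrt b"
    using eq n by (simp add: abs_mult)
qed

lemma RR: "R \<bullet> R = tm R R \<bullet> (mat 1 :: M)"
proof -
  have 1: "A \<bullet> (mat 1 :: M) = (\<Sum>i\<in>UNIV. A$i$i)" for A :: M
    unfolding inner_vec_def mat_def inner_real_def
    by (simp add: if_distrib[of "\<lambda>x. _ * x"] cong: if_cong)
  have 2: "(tm R R)$i$i = (\<Sum>k\<in>UNIV. R$k$i * R$k$i)" for i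
    unfolding tm_def matrix_matrix_mult_def transpose_def by simp
  have 3: "R \<bullet> R = (\<Sum>k\<in>UNIV. \<Sum>i\<in>UNIV. R$k$i * R$k$i)"
    unfolding inner_vec_def inner_real_def by simp
  show ?thesis unfolding 1 2 3 by (rule sum.swap)
qed

lemma Q_eq: "blinfun_apply (blinfun_apply (DD2 b c R) v) v =
  phi' b c (nn R) / nn R * (GG R \<bullet> DG R v)^2 + phi b c (nn R) * (GG R \<bullet> (tm v v + tm v v) + (norm (DG R v))^2)"
proof -
  have "blinfun_apply (blinfun_apply (DD2 b c R) v) v =
    phi' b c (nn R) / nn R * ((GG R \<bullet> DG R v) * (GG R \<bullet> DG R v)) + phi b c (nn R) * (GG R \<bullet> (tm v v + tm v v) + DG R v \<bullet> DG R v)"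
    by (simp add: DD2_def plus_blinfun.rep_eq scaleR_blinfun.rep_eq PP_def B1f_def DG_def)
  then show ?thesis by (simp add: power2_eq_square power2_norm_eq_inner[symmetric])
qed

lemma hess_bound:
  assumes b: "b > 0" and d: "d > 0"
  shows "\<exists>L. \<forall>R \<in> U_set d. \<forall>v :: M.
          - L * norm v ^ 2 \<le> blinfun_apply (blinfun_apply (DD2 b c R) v) v \<and>
          blinfun_apply (blinfun_apply (DD2 b c R) v) v \<le> L * norm v ^ 2"
proof -
  obtain K where K: "K > 0" "\<And>A B. norm (tm A B) \<le> norm A * norm B * K"
    using bounded_bilinear.pos_bounded[OF bb_tm] by blast
  define m where "m = norm (mat 1 :: M)"
  define K1 where "K1 = 1 + 2 * \<bar>c\<bar> / sqrt b"
  define L where "L = (K1 + 1) * (4 * K^2 * (m + m^2 / d)) + 2 * K"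
  have main: "\<bar>blinfun_apply (blinfun_apply (DD2 b c R) v) v\<bar> \<le> L * norm v ^ 2"
    if R: "R \<in> U_set d" for R v
  proof -
    let ?n = "nn R"
    have nd: "d < ?n" using R by (simp add: U_eq)
    have n: "?n > 0" using nd d by simp
    let ?s = "sq b c ?n"
    have s: "?s > 0" using sq_pos[OF b] .
    have s2: "?s^2 = (?n + c)^2 + b"
    proof -
      have "0 \<le> (?n + c)^2 + b" using b by (meson add_nonneg_nonneg zero_le_power2 less_imp_le)
      then show ?thesis unfolding sq_def by (rule real_sqrt_pow2)
    qed
    note pb = phi_real_bounds[OF n b s s2]
    have hy: "\<bar>phi b c ?n\<bar> \<le> 1 / ?n" using pb(1) by (simp add: phi_def)
    have hx: "\<bar>phi' b c ?n\<bar> * ?n^2 \<le> K1" using pb(2) by (simp add: phi'_def K1_def)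
    have hP: "\<bar>GG R \<bullet> DG R v\<bar> \<le> ?n * norm (DG R v)"
      unfolding nn_def by (rule Cauchy_Schwarz_ineq2)
    have hg: "norm (DG R v) \<le> 2 * K * norm R * norm v"
    proof -
      have "norm (DG R v) \<le> norm (tm R v) + norm (tm v R)" unfolding DG_def by (rule norm_triangle_ineq)
      also have "\<dots> \<le> norm R * norm v * K + norm v * norm R * K" by (intro add_mono K(2))
      finally show ?thesis by (simp add: algebra_simps)
    qed
    have hB: "\<bar>GG R \<bullet> (tm v v + tm v v)\<bar> \<le> 2 * K * ?n * norm v ^ 2"
    proof -
      have "\<bar>GG R \<bullet> (tm v v + tm v v)\<bar> \<le> ?n * norm (tm v v + tm v v)"
        unfolding nn_def by (rule Cauchy_Schwarz_ineq2)
      also have "\<dots> \<le> ?n * (norm (tm v v) + norm (tm v v))"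
        by (intro mult_left_mono norm_triangle_ineq) (use n in auto)
      also have "\<dots> = ?n * (2 * norm (tm v v))" by simp
      also have "\<dots> \<le> ?n * (2 * (norm v * norm v * K))" using n K(2)[of v v] by (intro mult_left_mono) auto
      finally show ?thesis by (simp add: power2_eq_square algebra_simps)
    qed
    have hr: "norm R ^ 2 \<le> m * ?n + m^2"
    proof -
      have "norm R ^ 2 = tm R R \<bullet> (mat 1 :: M)" using RR by (simp add: power2_norm_eq_inner)
      also have "\<dots> = GG R \<bullet> mat 1 + (mat 1 :: M) \<bullet> mat 1" by (simp add: GG_def inner_diff_left)
      also have "\<dots> \<le> ?n * m + m^2"
        using norm_cauchy_schwarz[of "GG R" "mat 1 :: M"] by (simp add: nn_def m_def power2_norm_eq_inner)
      finally show ?thesis by (simp add: mult.commute)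
    qed
    have "\<bar>phi' b c ?n / ?n * (GG R \<bullet> DG R v)^2 + phi b c ?n * (GG R \<bullet> (tm v v + tm v v) + (norm (DG R v))^2)\<bar>
       \<le> L * norm v ^ 2"
      unfolding L_def
      by (rule hess_real[OF d nd hP hg hB hr hy hx K(1)]) (auto simp: m_def)
    then show ?thesis by (simp add: Q_eq)
  qed
  show ?thesis
  proof (intro exI[of _ L] ballI allI)
    fix R v assume "R \<in> U_set d"
    from main[OF this, of v]
    show "- L * norm v ^ 2 \<le> blinfun_apply (blinfun_apply (DD2 b c R) v) v \<and>
          blinfun_apply (blinfun_apply (DD2 b c R) v) v \<le> L * norm v ^ 2"
      by (auto simp: abs_le_iff)
  qed
qed


theorem lemma11:
  fixes b c d :: real
  assumes "b > 0" and "d > 0"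
  shows "open (U_set d) \<and>
    (\<exists>(D1 :: real^3^3 \<Rightarrow> ((real^3^3) \<Rightarrow>\<^sub>L real))
       (D2 :: real^3^3 \<Rightarrow> ((real^3^3) \<Rightarrow>\<^sub>L ((real^3^3) \<Rightarrow>\<^sub>L real))).
       (\<forall>R \<in> U_set d. (P5 b c has_derivative blinfun_apply (D1 R)) (at R)) \<and>
       (\<forall>R \<in> U_set d. (D1 has_derivative blinfun_apply (D2 R)) (at R)) \<and>
       (\<forall>R \<in> U_set d. \<exists>e > 0. \<exists>K. K-lipschitz_on (ball R e \<inter> U_set d) D2) \<and>
       (\<exists>L. \<forall>R \<in> U_set d. \<forall>v :: real^3^3.
          - L * norm v ^ 2 \<le> blinfun_apply (blinfun_apply (D2 R) v) v \<and>
          blinfun_apply (blinfun_apply (D2 R) v) v \<le> L * norm v ^ 2))"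
  proof -
  have cont: "continuous_on UNIV nn"
  proof -
    have "continuous_on UNIV GG"
      using GG_deriv has_derivative_continuous continuous_at_imp_continuous_on by blast
    then show ?thesis unfolding nn_def[abs_def] by (intro continuous_on_norm)
  qed
  have op: "open (U_set d)"
    unfolding U_eq by (rule open_Collect_less[OF continuous_on_const cont])
  have G: "GG R \<noteq> 0" if "R \<in> U_set d" for R
    using that assms(2) by (auto simp: U_eq nn_def)
  show ?thesis
  proof (intro conjI op exI[of _ "DD1 b c"] exI[of _ "DD2 b c"])
    show "\<forall>R\<in>U_set d. (P5 b c has_derivative blinfun_apply (DD1 b c R)) (at R)"
      using P5_deriv[OF assms(1) G] by blast
    show "\<forall>R\<in>U_set d. (DD1 b c has_derivative blinfun_apply (DD2 b c R)) (at R)"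
      using D1_deriv[OF assms(1) G] by blast
    show "\<forall>R\<in>U_set d. \<exists>e>0. \<exists>K. K-lipschitz_on (ball R e \<inter> U_set d) (DD2 b c)"
      using LL_D2[OF assms] unfolding LL_def .
    show "\<exists>L. \<forall>R\<in>U_set d. \<forall>v. - L * (norm v)\<^sup>2 \<le> blinfun_apply (blinfun_apply (DD2 b c R) v) v \<and>
          blinfun_apply (blinfun_apply (DD2 b c R) v) v \<le> L * (norm v)\<^sup>2"
      using hess_bound[OF assms] .
  qed
qed

end
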